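(* Let $p\ge1$, let $\bm A\in\mathbb{R}^{m\times d}$, $\bm B\in\mathbb{R}^{n\times d}$ and $\bm V\in\mathbb{R}^{d\times k}$. Then \[d^p_{\mathrm{ERP}}(\bm A\bm V,\bm B\bm V)\le d^p_{\mathrm{ERP}}(\bm A,\bm B)\,\|\bm V\|_p.\] Moreover, if $\bm A,\bm B$ are sequences of one-hot vectors, then \[d^p_{\mathrm{ERP}}(\bm A\bm V,\bm B\bm V)\le d_{\mathrm{Lev}}(\bm A,\bm B)\cdot M(\bm V),\qquad M(\bm V)=\max\Big\{\max_{i\in\{1,\dots,d\}}\|\bm v_i\|_p,\ \max_{i,j\in\{1,\dots,d\}}\|\bm v_i-\bm v_j\|_p\Big\},\] where $\bm v_i$ is the $i$-th row of $\bm V$.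
   Context: $\bm A\bm V$ is the sequence with rows $\bm a_i\bm V$ (row vector times matrix), and $\|\bm V\|_p$ is the operator norm of $\bm x\mapsto\bm x\bm V$ induced by the $\ell_p$ norm. The ERP distance is defined recursively: $d^p_{\mathrm{ERP}}(\bm A,\emptyset)=\sum_{i}\|\bm a_i\|_p$, $d^p_{\mathrm{ERP}}(\emptyset,\bm B)=\sum_{i}\|\bm b_i\|_p$, and otherwise $d^p_{\mathrm{ERP}}(\bm A,\bm B)=\min\{\|\bm a_1\|_p+d^p_{\mathrm{ERP}}(\bm A_{2:},\bm B),\ \|\bm b_1\|_p+d^p_{\mathrm{ERP}}(\bm A,\bm B_{2:}),\ \|\bm a_1-\bm b_1\|_p+d^p_{\mathrm{ERP}}(\bm A_{2:},\bm B_{2:})\}$ ($\emptyset$ the empty sequence, $\bm A_{2:}$ removes the first row). One-hot vectors are vectors in $\{0,1\}^d$ with exactly one entry equal to $1$; $d_{\mathrm{Lev}}$ is the Levenshtein distance (minimum number of single-element insertions, deletions and substitutions). *)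

theory Defs
  imports "HOL-Analysis.Analysis"
begin

text \<open>Vectors in R^d are \<open>real ^ 'd\<close>; a d x k matrix is \<open>real ^ 'k ^ 'd\<close>,
  whose i-th row is \<open>V $ i\<close>. A sequence (matrix with m rows) is a list of row vectors.\<close>

definition lp_norm :: "real \<Rightarrow> real ^ 'n \<Rightarrow> real" where
  "lp_norm p x = (\<Sum>i\<in>UNIV. \<bar>x $ i\<bar> powr p) powr (1 / p)"

definition op_norm_p :: "real \<Rightarrow> real ^ 'k ^ 'd \<Rightarrow> real" where
  "op_norm_p p V = Sup {lp_norm p (x v* V) | x :: real ^ 'd. lp_norm p x \<le> 1}"

definition seq_mult :: "(real ^ 'd) list \<Rightarrow> real ^ 'k ^ 'd \<Rightarrow> (real ^ 'k) list" where
  "seq_mult A V = map (\<lambda>a. a v* V) A"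

function erp :: "real \<Rightarrow> (real ^ 'n) list \<Rightarrow> (real ^ 'n) list \<Rightarrow> real" where
  "erp p [] bs = (\<Sum>b\<leftarrow>bs. lp_norm p b)"
| "erp p (a # as) [] = (\<Sum>x\<leftarrow>a # as. lp_norm p x)"
| "erp p (a # as) (b # bs) =
     min (lp_norm p a + erp p as (b # bs))
       (min (lp_norm p b + erp p (a # as) bs)
            (lp_norm p (a - b) + erp p as bs))"
  by pat_completeness auto
termination by (relation "Wellfounded.measure (\<lambda>(p, as, bs). length as + length bs)") auto

function lev :: "'a list \<Rightarrow> 'a list \<Rightarrow> nat" where
  "lev [] bs = length bs"
| "lev (a # as) [] = length (a # as)"
| "lev (a # as) (b # bs) =
     min (1 + lev as (b # bs))
       (min (1 + lev (a # as) bs)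
            ((if a = b then 0 else 1) + lev as bs))"
  by pat_completeness auto
termination by (relation "Wellfounded.measure (\<lambda>(as, bs). length as + length bs)") auto

definition one_hot :: "real ^ 'n \<Rightarrow> bool" where
  "one_hot x \<longleftrightarrow> (\<forall>i. x $ i \<in> {0, 1}) \<and> card {i. x $ i = 1} = 1"

definition M_const :: "real \<Rightarrow> real ^ 'k ^ 'd \<Rightarrow> real" where
  "M_const p V = max (Max {lp_norm p (V $ i) | i. True})
                     (Max {lp_norm p (V $ i - V $ j) | i j. True})"

end

theory Submission
  imports Defs
begin

lemma lp_nonneg: "0 \<le> lp_norm p x"
  unfolding lp_norm_def by simp

lemma lp_zero: "lp_norm p 0 = 0"
  unfolding lp_norm_def by simp

lemma lp_eq0:
  assumes "p > 0" "lp_norm p x = 0" shows "x = 0"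
proof -
  have "(\<Sum>i\<in>UNIV. \<bar>x $ i\<bar> powr p) = 0" using assms unfolding lp_norm_def by simp
  then have "\<forall>i\<in>UNIV. \<bar>x $ i\<bar> powr p = 0"
    by (subst (asm) sum_nonneg_eq_0_iff) auto
  then show ?thesis by (simp add: vec_eq_iff)
qed

lemma lp_scale:
  assumes "p > 0" shows "lp_norm p (c *\<^sub>R x) = \<bar>c\<bar> * lp_norm p x"
proof -
  have "(\<Sum>i\<in>UNIV. \<bar>(c *\<^sub>R x) $ i\<bar> powr p) = \<bar>c\<bar> powr p * (\<Sum>i\<in>UNIV. \<bar>x $ i\<bar> powr p)"
    by (simp add: sum_distrib_left abs_mult powr_mult)
  then have "lp_norm p (c *\<^sub>R x) = (\<bar>c\<bar> powr p) powr (1/p) * (\<Sum>i\<in>UNIV. \<bar>x $ i\<bar> powr p) powr (1/p)"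
    unfolding lp_norm_def by (simp add: powr_mult)
  also have "(\<bar>c\<bar> powr p) powr (1/p) = \<bar>c\<bar>"
    using assms by (simp add: powr_powr)
  finally show ?thesis unfolding lp_norm_def by simp
qed

lemma lp_bound:
  fixes y :: "real ^ 'n"
  assumes "p > 0" "\<And>j. \<bar>y $ j\<bar> \<le> C"
  shows "lp_norm p y \<le> (real CARD('n) * C powr p) powr (1/p)"
proof -
  have C: "C \<ge> 0" using assms(2) abs_ge_zero order_trans by blast
  have "(\<Sum>i\<in>UNIV. \<bar>y $ i\<bar> powr p) \<le> (\<Sum>i\<in>(UNIV::'n set). C powr p)"
    by (rule sum_mono) (use assms in \<open>auto intro: powr_mono2\<close>)
  then show ?thesis unfolding lp_norm_def
    by (intro powr_mono2) (use assms in \<open>auto intro: sum_nonneg\<close>)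
qed

lemma lp_comp:
  assumes "p > 0" shows "\<bar>x $ i\<bar> \<le> lp_norm p x"
proof -
  have "\<bar>x $ i\<bar> powr p \<le> (\<Sum>i\<in>UNIV. \<bar>x $ i\<bar> powr p)"
    by (rule member_le_sum) auto
  then have "(\<bar>x $ i\<bar> powr p) powr (1/p) \<le> (\<Sum>i\<in>UNIV. \<bar>x $ i\<bar> powr p) powr (1/p)"
    by (intro powr_mono2) (use assms in auto)
  then show ?thesis using assms unfolding lp_norm_def by (simp add: powr_powr)
qed

lemma op_bdd:
  fixes V :: "real ^ 'k ^ 'd"
  assumes "p > 0"
  shows "bdd_above {lp_norm p (x v* V) | x :: real ^ 'd. lp_norm p x \<le> 1}"
proof -
  define C where "C = (\<Sum>i\<in>UNIV. \<Sum>j\<in>UNIV. \<bar>V $ i $ j\<bar>)"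
  have "lp_norm p (x v* V) \<le> (real CARD('k) * C powr p) powr (1/p)" if "lp_norm p x \<le> 1" for x :: "real ^ 'd"
  proof (rule lp_bound[OF assms])
    fix j
    have "\<bar>(x v* V) $ j\<bar> = \<bar>\<Sum>i\<in>UNIV. x $ i * V $ i $ j\<bar>"
      by (simp add: vector_matrix_mult_def)
    also have "\<dots> \<le> (\<Sum>i\<in>UNIV. \<bar>x $ i * V $ i $ j\<bar>)" by (rule sum_abs)
    also have "\<dots> \<le> (\<Sum>i\<in>UNIV. \<bar>V $ i $ j\<bar>)"
    proof (rule sum_mono)
      fix i
      have "\<bar>x $ i\<bar> \<le> 1" using lp_comp[OF assms, of x i] that by simp
      then show "\<bar>x $ i * V $ i $ j\<bar> \<le> \<bar>V $ i $ j\<bar>"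
        by (simp add: abs_mult mult_left_le_one_le)
    qed
    also have "\<dots> = (\<Sum>j'\<in>{j}. \<Sum>i\<in>UNIV. \<bar>V $ i $ j'\<bar>)" by simp
    also have "\<dots> \<le> (\<Sum>j'\<in>UNIV. \<Sum>i\<in>UNIV. \<bar>V $ i $ j'\<bar>)"
      by (rule sum_mono2) auto
    also have "\<dots> = C" unfolding C_def by (rule sum.swap)
    finally show "\<bar>(x v* V) $ j\<bar> \<le> C" .
  qed
  then show ?thesis unfolding bdd_above_def by blast
qed

lemma op_norm_bound:
  fixes V :: "real ^ 'k ^ 'd"
  assumes "p > 0"
  shows "lp_norm p (x v* V) \<le> lp_norm p x * op_norm_p p V"
proof (cases "x = 0")
  case True then show ?thesis by (simp add: lp_zero)
next
  case False
  define n where "n = lp_norm p x"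
  have n: "n > 0" using lp_eq0[OF assms, of x] False lp_nonneg[of p x] unfolding n_def by fastforce
  define y where "y = (1/n) *\<^sub>R x"
  have ly: "lp_norm p y = 1" unfolding y_def using lp_scale[OF assms, of "1/n" x] n n_def by simp
  have "lp_norm p (y v* V) \<le> op_norm_p p V"
    unfolding op_norm_p_def
    by (rule cSup_upper[OF _ op_bdd[OF assms]]) (use ly in auto)
  moreover have "lp_norm p (y v* V) = (1/n) * lp_norm p (x v* V)"
    unfolding y_def scaleR_vector_matrix_assoc using lp_scale[OF assms, of "1/n" "x v* V"] n by simp
  ultimately show ?thesis using n unfolding n_def[symmetric]
    by (simp add: field_simps)
qed

lemma op_norm_nonneg:
  fixes V :: "real ^ 'k ^ 'd"
  assumes "p > 0" shows "0 \<le> op_norm_p p V"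
proof -
  have "lp_norm p ((0::real^'d) v* V) \<le> op_norm_p p V"
    unfolding op_norm_p_def
    by (rule cSup_upper[OF _ op_bdd[OF assms]]) (auto simp: lp_zero intro!: exI[of _ 0])
  then show ?thesis by (simp add: lp_zero)
qed

lemma min3_mono: "(x1::real) \<le> y1 \<Longrightarrow> x2 \<le> y2 \<Longrightarrow> x3 \<le> y3 \<Longrightarrow> min x1 (min x2 x3) \<le> min y1 (min y2 y3)"
  by linarith

lemma min3_le: "(N::real) \<ge> 0 \<Longrightarrow> x \<le> u * N \<Longrightarrow> x \<le> v * N \<Longrightarrow> x \<le> w * N \<Longrightarrow> x \<le> min u (min v w) * N"
  by (simp add: min_def)

lemma min3_le_nat: "(N::real) \<ge> 0 \<Longrightarrow> x \<le> real u * N \<Longrightarrow> x \<le> real v * N \<Longrightarrow> x \<le> real w * N \<Longrightarrow> x \<le> real (min u (min v w)) * N"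
  by (simp add: min_def)

lemma seq_mult_simps[simp]: "seq_mult [] V = []" "seq_mult (a # as) V = (a v* V) # seq_mult as V"
  by (simp_all add: seq_mult_def)

lemma sum1: "N \<ge> 0 \<Longrightarrow> (\<forall>b\<in>set bs. lp_norm p (b v* V) \<le> lp_norm p b * N) \<Longrightarrow>
  (\<Sum>b\<leftarrow>seq_mult bs V. lp_norm p b) \<le> (\<Sum>b\<leftarrow>bs. lp_norm p b) * N"
  by (induction bs) (auto simp: algebra_simps intro: add_mono)

lemma sum2: "(\<forall>b\<in>set bs. lp_norm p (b v* V) \<le> M) \<Longrightarrow>
  (\<Sum>b\<leftarrow>seq_mult bs V. lp_norm p b) \<le> real (length bs) * M"
  by (induction bs) (auto simp: algebra_simps intro: add_mono)

lemma part1: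
  fixes V :: "real ^ 'k ^ 'd"
  shows "p > 0 \<Longrightarrow> erp p (seq_mult A V) (seq_mult B V) \<le> erp p A B * op_norm_p p V"
proof (induction p A B rule: erp.induct)
  case (1 p bs)
  have "\<forall>b\<in>set bs. lp_norm p (b v* V) \<le> lp_norm p b * op_norm_p p V" using op_norm_bound[OF 1] by blast
  then show ?case using sum1[OF op_norm_nonneg[OF 1]] by simp
next
  case (2 p a as)
  have "\<forall>b\<in>set (a # as). lp_norm p (b v* V) \<le> lp_norm p b * op_norm_p p V" using op_norm_bound[OF 2] by blast
  then show ?case using sum1[OF op_norm_nonneg[OF 2], of "a # as"] by simp
next
  case (3 p a as b bs)
  note N = op_norm_nonneg[OF 3(4), of V]
  note ob = op_norm_bound[OF 3(4), of _ V]
  show ?case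
    apply (simp only: seq_mult_simps erp.simps)
    apply (rule order.trans[OF _ min3_le[OF N]])
    using 3 ob[of a] ob[of b] ob[of "a - b"]
    by (auto simp: vector_matrix_mult_diff_distrib algebra_simps intro: min.coboundedI1 min.coboundedI2 add_mono order.trans)
qed

lemma one_hot_mult:
  assumes "one_hot a" shows "\<exists>i. a v* V = V $ i"
proof -
  from assms obtain i where i: "{i. a $ i = 1} = {i}"
    unfolding one_hot_def by (auto simp: card_Suc_eq)
  have a: "a $ j = (if j = i then 1 else 0)" for j
  proof -
    have "a $ j = 1 \<longleftrightarrow> j = i" using i by blast
    moreover have "a $ j \<in> {0, 1}" using assms unfolding one_hot_def by blast
    ultimately show ?thesis by auto
  qed
  have "a v* V = V $ i"
    by (simp add: vector_matrix_mult_def vec_eq_iff a if_distrib[of "\<lambda>x. x * _"] cong: if_cong)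
  then show ?thesis by blast
qed

lemma M_bounds:
  fixes V :: "real ^ 'k ^ 'd"
  shows "lp_norm p (V $ i) \<le> M_const p V" "lp_norm p (V $ i - V $ j) \<le> M_const p V"
proof -
  have f1: "finite {lp_norm p (V $ i) | i. True}" by (simp add: full_SetCompr_eq)
  have "{lp_norm p (V $ i - V $ j) | i j. True} = (\<lambda>(i,j). lp_norm p (V $ i - V $ j)) ` UNIV" by auto
  then have f2: "finite {lp_norm p (V $ i - V $ j) | i j. True}" by simp
  show "lp_norm p (V $ i) \<le> M_const p V" unfolding M_const_def
    by (rule order_trans[OF _ max.cobounded1]) (rule Max_ge[OF f1], auto)
  show "lp_norm p (V $ i - V $ j) \<le> M_const p V" unfolding M_const_def
    by (rule order_trans[OF _ max.cobounded2]) (rule Max_ge[OF f2], auto)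
qed

lemma part2:
  fixes V :: "real ^ 'k ^ 'd" and A B :: "(real ^ 'd) list"
  shows "(\<forall>a\<in>set A. one_hot a) \<Longrightarrow> (\<forall>b\<in>set B. one_hot b) \<Longrightarrow>
    erp p (seq_mult A V) (seq_mult B V) \<le> real (lev A B) * M_const p V"
proof (induction A B rule: lev.induct)
  have b1: "lp_norm p (a v* V) \<le> M_const p V" if "one_hot a" for a :: "real ^ 'd"
    using one_hot_mult[OF that, of V] M_bounds by metis
  have M0: "0 \<le> M_const p V" using M_bounds(1)[of p V] lp_nonneg order_trans by blast
  {
    case (1 bs)
    then show ?case using sum2[of bs p V "M_const p V"] b1 by simp
  next
    case (2 a as)
    then show ?case using sum2[of "a # as" p V "M_const p V"] b1 by simp
  next
    case (3 a as b bs)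
    have d: "lp_norm p (a v* V - b v* V) \<le> real (if a = b then 0 else 1) * M_const p V"
    proof (cases "a = b")
      case True then show ?thesis by (simp add: lp_zero)
    next
      case False
      obtain i j where "a v* V = V $ i" "b v* V = V $ j"
        using one_hot_mult 3(4,5) by (metis list.set_intros(1))
      then show ?thesis using False M_bounds(2) by simp
    qed
    have ba: "lp_norm p (a v* V) \<le> M_const p V" and bb: "lp_norm p (b v* V) \<le> M_const p V"
      using b1 3(4,5) by auto
    show ?case
      apply (simp only: seq_mult_simps erp.simps lev.simps)
      apply (rule min3_le_nat[OF M0])
      using 3 ba bb d
      by (auto simp: algebra_simps intro: min.coboundedI1 min.coboundedI2 add_mono order.trans)
  }
qed

theorem lemma4:
  fixes p :: real
    and A B :: "(real ^ 'd) list"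
    and V :: "real ^ 'k ^ 'd"
  assumes "p \<ge> 1"
  shows "erp p (seq_mult A V) (seq_mult B V) \<le> erp p A B * op_norm_p p V
         \<and> ((\<forall>a\<in>set A. one_hot a) \<and> (\<forall>b\<in>set B. one_hot b) \<longrightarrow>
            erp p (seq_mult A V) (seq_mult B V) \<le> real (lev A B) * M_const p V)"
  using part1[of p A V B] part2[of A B p V] assms by auto

end
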